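(* For a solid weak BCC-algebra $(X,*,0)$ the following conditions are equivalent: (a) $X$ is branchwise commutative; (b) $x*y=x*(y*(y*x))$ for all $x,y$ belonging to the same branch; (c) $x=y*(y*x)$ for all $x,y\in X$ with $x\leqslant y$; (d) $x*(x*y)=y*(y*(x*(x*y)))$ for all $x,y$ belonging to the same branch.
   Context: A weak BCC-algebra is a set $X$ with a binary operation $*$ and a constant $0$ satisfying, for all $x,y,z\in X$: (i) $((x*y)*(z*y))*(x*z)=0$; (ii) $x*x=0$; (iii) $x*0=x$; (iv) $x*y=y*x=0$ implies $x=y$. The relation $x\leqslant y$ iff $x*y=0$ is a partial order on $X$. Let $I(X)$ be the set of minimal elements of $X$ with respect to $\leqslant$. For $a\in I(X)$ the branch initiated by $a$ is $B(a)=\{x\in X: a\leqslant x\}$; "belonging to the same branch" means lying in a common $B(a)$. A weak BCC-algebra is called (left) solid if $(x*y)*z=(x*z)*y$ holds for all $x,y$ belonging to the same branch and all $z\in X$. It is called branchwise commutative if $x*(x*y)=y*(y*x)$ holds for all $x,y$ belonging to the same branch. *)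

theory Defs
  imports Main
begin

definition weak_BCC :: "'a set \<Rightarrow> ('a \<Rightarrow> 'a \<Rightarrow> 'a) \<Rightarrow> 'a \<Rightarrow> bool" where
  "weak_BCC X m e \<longleftrightarrow>
     e \<in> X \<and> (\<forall>x\<in>X. \<forall>y\<in>X. m x y \<in> X) \<and>
     (\<forall>x\<in>X. \<forall>y\<in>X. \<forall>z\<in>X. m (m (m x y) (m z y)) (m x z) = e) \<and>
     (\<forall>x\<in>X. m x x = e) \<and>
     (\<forall>x\<in>X. m x e = x) \<and>
     (\<forall>x\<in>X. \<forall>y\<in>X. m x y = e \<and> m y x = e \<longrightarrow> x = y)"

definition bcc_le :: "('a \<Rightarrow> 'a \<Rightarrow> 'a) \<Rightarrow> 'a \<Rightarrow> 'a \<Rightarrow> 'a \<Rightarrow> bool" where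
  "bcc_le m e x y \<longleftrightarrow> m x y = e"

definition minimal_elems :: "'a set \<Rightarrow> ('a \<Rightarrow> 'a \<Rightarrow> 'a) \<Rightarrow> 'a \<Rightarrow> 'a set" where
  "minimal_elems X m e = {a \<in> X. \<forall>x\<in>X. bcc_le m e x a \<longrightarrow> x = a}"

definition branch :: "'a set \<Rightarrow> ('a \<Rightarrow> 'a \<Rightarrow> 'a) \<Rightarrow> 'a \<Rightarrow> 'a \<Rightarrow> 'a set" where
  "branch X m e a = {x \<in> X. bcc_le m e a x}"

definition same_branch :: "'a set \<Rightarrow> ('a \<Rightarrow> 'a \<Rightarrow> 'a) \<Rightarrow> 'a \<Rightarrow> 'a \<Rightarrow> 'a \<Rightarrow> bool" where
  "same_branch X m e x y \<longleftrightarrow>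
     (\<exists>a\<in>minimal_elems X m e. x \<in> branch X m e a \<and> y \<in> branch X m e a)"

definition solid :: "'a set \<Rightarrow> ('a \<Rightarrow> 'a \<Rightarrow> 'a) \<Rightarrow> 'a \<Rightarrow> bool" where
  "solid X m e \<longleftrightarrow>
     (\<forall>x\<in>X. \<forall>y\<in>X. \<forall>z\<in>X. same_branch X m e x y \<longrightarrow> m (m x y) z = m (m x z) y)"

definition branchwise_commutative :: "'a set \<Rightarrow> ('a \<Rightarrow> 'a \<Rightarrow> 'a) \<Rightarrow> 'a \<Rightarrow> bool" where
  "branchwise_commutative X m e \<longleftrightarrow>
     (\<forall>x\<in>X. \<forall>y\<in>X. same_branch X m e x y \<longrightarrow> m x (m x y) = m y (m y x))"

end

theory Submission imports Defs begin
locale wb =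
  fixes X and m :: "'a \<Rightarrow> 'a \<Rightarrow> 'a" and e :: 'a
  assumes e: "e \<in> X" and cl: "\<And>x y. x \<in> X \<Longrightarrow> y \<in> X \<Longrightarrow> m x y \<in> X"
  and a1: "\<And>x y z. x \<in> X \<Longrightarrow> y \<in> X \<Longrightarrow> z \<in> X \<Longrightarrow> m (m (m x y) (m z y)) (m x z) = e"
  and a2: "\<And>x. x \<in> X \<Longrightarrow> m x x = e"
  and a3: "\<And>x. x \<in> X \<Longrightarrow> m x e = x"
  and a4: "\<And>x y. x \<in> X \<Longrightarrow> y \<in> X \<Longrightarrow> m x y = e \<Longrightarrow> m y x = e \<Longrightarrow> x = y"
begin
lemma anti: "x \<in> X \<Longrightarrow> y \<in> X \<Longrightarrow> z \<in> X \<Longrightarrow> m x y = e \<Longrightarrow> m (m z y) (m z x) = e"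
  using a1[of z y x] a3 cl by simp
lemma mono: "x \<in> X \<Longrightarrow> y \<in> X \<Longrightarrow> z \<in> X \<Longrightarrow> m x y = e \<Longrightarrow> m (m x z) (m y z) = e"
  using a1[of x z y] a3 cl by simp
lemma P1: "x \<in> X \<Longrightarrow> y \<in> X \<Longrightarrow> m (m e (m y x)) (m x y) = e"
  using a1[of x x y] a2 by simp
lemma P0: "a \<in> X \<Longrightarrow> b \<in> X \<Longrightarrow> m (m (m a b) (m e b)) a = e"
  using a1[of a b e] a3 e by simp
lemma K: "x \<in> X \<Longrightarrow> y \<in> X \<Longrightarrow> m e (m e (m x y)) = m e (m y x)"
proof -
  assume x: "x \<in> X" and y: "y \<in> X"
  have 1: "m (m e (m y x)) (m e (m e (m x y))) = e"
    using anti[of "m e (m x y)" "m y x" e] P1[OF y x] cl x y e by simp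
  have 2: "m (m e (m e (m x y))) (m e (m y x)) = e"
    using P0[of "m e (m y x)" "m x y"] P1[OF x y] cl x y e by simp
  show ?thesis using a4 1 2 cl x y e by metis
qed
lemma L1: "x \<in> X \<Longrightarrow> m (m e (m e x)) x = e"
  using P1[of x e] e a3 by simp
lemma L3: "x \<in> X \<Longrightarrow> m e (m e (m e x)) = m e x"
  using K[of e x] e a3 a2 by simp
lemma L2: "a \<in> X \<Longrightarrow> x \<in> X \<Longrightarrow> m a x = e \<Longrightarrow> m e a = m e x"
  by (metis L3 P0 a4 cl)
lemma SB: "x \<in> X \<Longrightarrow> y \<in> X \<Longrightarrow> same_branch X m e x y \<longleftrightarrow> m e x = m e y"
proof
  assume x: "x \<in> X" and y: "y \<in> X"
  assume "same_branch X m e x y"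
  then obtain a where "a \<in> X" "m a x = e" "m a y = e"
    unfolding same_branch_def minimal_elems_def branch_def bcc_le_def by blast
  then show "m e x = m e y" using L2 x y by metis
next
  assume x: "x \<in> X" and y: "y \<in> X" and h: "m e x = m e y"
  define a where "a = m e (m e x)"
  have aX: "a \<in> X" using a_def cl e x by simp
  have ax: "m a x = e" using L1 x a_def by simp
  have ay: "m a y = e" using L1 y a_def h by simp
  have amin: "a \<in> minimal_elems X m e"
    unfolding minimal_elems_def bcc_le_def
  proof (intro CollectI conjI ballI impI)
    show "a \<in> X" by fact
    fix w assume w: "w \<in> X" and wa: "m w a = e"
    have "m e w = m e a" using L2[OF w aX wa] .
    also have "\<dots> = m e x" using L3 x a_def by simp
    finally have "m e (m e w) = a" using a_def by simp
    then have "m a w = e" using L1[OF w] by simp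
    then show "w = a" using a4 w aX wa by blast
  qed
  show "same_branch X m e x y" unfolding same_branch_def branch_def bcc_le_def
    using amin ax ay x y by blast
qed
end
locale swb = wb +
  assumes sol: "\<And>x y z. x \<in> X \<Longrightarrow> y \<in> X \<Longrightarrow> z \<in> X \<Longrightarrow> m e x = m e y \<Longrightarrow> m (m x y) z = m (m x z) y"
begin
lemma G1: "x \<in> X \<Longrightarrow> y \<in> X \<Longrightarrow> m e x = m e y \<Longrightarrow> m e (m x y) = e"
  by (metis a1 a2 cl sol)
lemma F2: "x \<in> X \<Longrightarrow> y \<in> X \<Longrightarrow> m e x = m e y \<Longrightarrow> m (m x (m x y)) y = e"
  using sol[of x y "m x y"] a2 cl by simp
lemma G2: "x \<in> X \<Longrightarrow> y \<in> X \<Longrightarrow> m e x = m e y \<Longrightarrow> m (m x (m x y)) x = e"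
  using anti[of e "m x y" x] G1 cl e a3 by simp
lemma G3: "x \<in> X \<Longrightarrow> y \<in> X \<Longrightarrow> m e x = m e y \<Longrightarrow> m x (m x (m x y)) = m x y"
proof -
  assume x: "x \<in> X" and y: "y \<in> X" and h: "m e x = m e y"
  define u where "u = m x (m x y)"
  have uX: "u \<in> X" using u_def cl x y by simp
  have 1: "m (m x y) (m x u) = e" using anti[OF uX y x] F2[OF x y h] u_def by simp
  have "m e u = m e x" using L2[OF uX x] G2[OF x y h] u_def by simp
  then have 2: "m (m x u) (m x y) = e" using sol[of x u "m x y"] x uX cl y a2 u_def by simp
  show ?thesis using a4 1 2 cl x y uX u_def by metis
qed

theorem main:
  "((\<forall>x\<in>X. \<forall>y\<in>X. m e x = m e y \<longrightarrow> m x (m x y) = m y (m y x))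
            \<longleftrightarrow> (\<forall>x\<in>X. \<forall>y\<in>X. m e x = m e y \<longrightarrow> m x y = m x (m y (m y x))))
       \<and> ((\<forall>x\<in>X. \<forall>y\<in>X. m e x = m e y \<longrightarrow> m x y = m x (m y (m y x)))
            \<longleftrightarrow> (\<forall>x\<in>X. \<forall>y\<in>X. m x y = e \<longrightarrow> x = m y (m y x)))
       \<and> ((\<forall>x\<in>X. \<forall>y\<in>X. m x y = e \<longrightarrow> x = m y (m y x))
            \<longleftrightarrow> (\<forall>x\<in>X. \<forall>y\<in>X. m e x = m e y \<longrightarrow> m x (m x y) = m y (m y (m x (m x y)))))"
proof -
  have ab: "\<forall>x\<in>X. \<forall>y\<in>X. m e x = m e y \<longrightarrow> m x y = m x (m y (m y x))"
    if A: "\<forall>x\<in>X. \<forall>y\<in>X. m e x = m e y \<longrightarrow> m x (m x y) = m y (m y x)"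
  proof (intro ballI impI)
    fix x y assume x: "x \<in> X" and y: "y \<in> X" and h: "m e x = m e y"
    have "m y (m y x) = m x (m x y)" using A x y h by metis
    then show "m x y = m x (m y (m y x))" using G3[OF x y h] by simp
  qed
  have ba: "\<forall>x\<in>X. \<forall>y\<in>X. m e x = m e y \<longrightarrow> m x (m x y) = m y (m y x)"
    if B: "\<forall>x\<in>X. \<forall>y\<in>X. m e x = m e y \<longrightarrow> m x y = m x (m y (m y x))"
  proof -
    have le: "m (m x (m x y)) (m y (m y x)) = e"
      if x: "x \<in> X" and y: "y \<in> X" and h: "m e x = m e y" for x y
    proof -
      define q where "q = m y (m y x)"
      have qX: "q \<in> X" using q_def cl x y by simp
      have qx: "m q x = e" using F2[OF y x] h q_def by simp
      have hq: "m e x = m e q" using L2[OF qX x qx] by simp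
      have "m x y = m x q" using B x y h q_def by metis
      then show ?thesis using F2[OF x qX hq] q_def by simp
    qed
    show ?thesis
    proof (intro ballI impI)
      fix x y assume x: "x \<in> X" and y: "y \<in> X" and h: "m e x = m e y"
      show "m x (m x y) = m y (m y x)"
        using le[OF x y h] le[OF y x h[symmetric]] a4 cl x y by metis
    qed
  qed
  have bc: "\<forall>x\<in>X. \<forall>y\<in>X. m x y = e \<longrightarrow> x = m y (m y x)"
    if B: "\<forall>x\<in>X. \<forall>y\<in>X. m e x = m e y \<longrightarrow> m x y = m x (m y (m y x))"
  proof (intro ballI impI)
    fix x y assume x: "x \<in> X" and y: "y \<in> X" and xy: "m x y = e"
    have h: "m e x = m e y" using L2[OF x y xy] .
    have 1: "m x (m y (m y x)) = e" using B x y h xy by metis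
    have 2: "m (m y (m y x)) x = e" using F2[OF y x] h by simp
    show "x = m y (m y x)" using a4 1 2 cl x y by metis
  qed
  have cb: "\<forall>x\<in>X. \<forall>y\<in>X. m e x = m e y \<longrightarrow> m x y = m x (m y (m y x))"
    if C: "\<forall>x\<in>X. \<forall>y\<in>X. m x y = e \<longrightarrow> x = m y (m y x)"
  proof (intro ballI impI)
    fix x y assume x: "x \<in> X" and y: "y \<in> X" and h: "m e x = m e y"
    define q where "q = m y (m y x)"
    define p where "p = m x (m x y)"
    have qX: "q \<in> X" using q_def cl x y by simp
    have pX: "p \<in> X" using p_def cl x y by simp
    have qx: "m q x = e" using F2[OF y x] h q_def by simp
    have qy: "m q y = e" using G2[OF y x] h q_def by simp
    have px: "m p x = e" using G2[OF x y h] p_def by simp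
    have py: "m p y = e" using F2[OF x y h] p_def by simp
    have hq: "m e x = m e q" using L2[OF qX x qx] by simp
    have 1: "m (m x y) (m x q) = e" using anti[OF qX y x qy] .
    have pp: "p = m y (m y p)" using C pX y py by metis
    have "m (m y x) (m y p) = e" using anti[OF pX x y px] .
    then have "m (m y (m y p)) (m y (m y x)) = e" using anti[of "m y x" "m y p" y] cl y x pX by simp
    then have pq: "m p q = e" using pp q_def by simp
    have "m (m x q) (m x y) = m p q" using sol[of x q "m x y"] hq x qX y cl p_def by simp
    then have 2: "m (m x q) (m x y) = e" using pq by simp
    show "m x y = m x (m y (m y x))" using a4 1 2 cl x y qX q_def by metis
  qed
  have cd: "\<forall>x\<in>X. \<forall>y\<in>X. m e x = m e y \<longrightarrow> m x (m x y) = m y (m y (m x (m x y)))"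
    if C: "\<forall>x\<in>X. \<forall>y\<in>X. m x y = e \<longrightarrow> x = m y (m y x)"
  proof (intro ballI impI)
    fix x y assume x: "x \<in> X" and y: "y \<in> X" and h: "m e x = m e y"
    have "m x (m x y) \<in> X" using cl x y by simp
    then show "m x (m x y) = m y (m y (m x (m x y)))" using C y F2[OF x y h] by metis
  qed
  have dc: "\<forall>x\<in>X. \<forall>y\<in>X. m x y = e \<longrightarrow> x = m y (m y x)"
    if D: "\<forall>x\<in>X. \<forall>y\<in>X. m e x = m e y \<longrightarrow> m x (m x y) = m y (m y (m x (m x y)))"
  proof (intro ballI impI)
    fix x y assume x: "x \<in> X" and y: "y \<in> X" and xy: "m x y = e"
    have h: "m e x = m e y" using L2[OF x y xy] .
    have "m x (m x y) = m y (m y (m x (m x y)))" using D x y h by metis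
    then show "x = m y (m y x)" using xy a3 x by simp
  qed
  show ?thesis using ab ba bc cb cd dc by blast
qed
end

theorem theorem3p6:
  fixes X :: "'a set" and m :: "'a \<Rightarrow> 'a \<Rightarrow> 'a" and e :: 'a
  assumes "weak_BCC X m e" and "solid X m e"
  shows "(branchwise_commutative X m e
            \<longleftrightarrow> (\<forall>x\<in>X. \<forall>y\<in>X. same_branch X m e x y \<longrightarrow> m x y = m x (m y (m y x))))
       \<and> ((\<forall>x\<in>X. \<forall>y\<in>X. same_branch X m e x y \<longrightarrow> m x y = m x (m y (m y x)))
            \<longleftrightarrow> (\<forall>x\<in>X. \<forall>y\<in>X. bcc_le m e x y \<longrightarrow> x = m y (m y x)))
       \<and> ((\<forall>x\<in>X. \<forall>y\<in>X. bcc_le m e x y \<longrightarrow> x = m y (m y x))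
            \<longleftrightarrow> (\<forall>x\<in>X. \<forall>y\<in>X. same_branch X m e x y \<longrightarrow> m x (m x y) = m y (m y (m x (m x y)))))"
proof -
  interpret wb X m e using assms(1) unfolding weak_BCC_def by unfold_locales blast+
  interpret swb X m e
  proof
    fix x y z assume "x \<in> X" "y \<in> X" "z \<in> X" "m e x = m e y"
    then show "m (m x y) z = m (m x z) y" using assms(2) SB unfolding solid_def by blast
  qed
  have eq: "\<And>P. (\<forall>x\<in>X. \<forall>y\<in>X. same_branch X m e x y \<longrightarrow> P x y) \<longleftrightarrow> (\<forall>x\<in>X. \<forall>y\<in>X. m e x = m e y \<longrightarrow> P x y)"
    using SB by auto
  show ?thesis unfolding branchwise_commutative_def eq bcc_le_def using main by blast
qed

end
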